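(* Let $I=[a,b]$ be a compact interval, $r\ge 1$ an integer, $\varphi\in C^r(I,\mathbb{R})$, and put $C_r:=\|\varphi^{(r)}\|_{L^\infty(I)}$. Then there exists a decomposition of the set $\{x\in I:\varphi(x)\neq 0\}$ into pairwise disjoint intervals $I_{\lambda,\iota}$, where $\lambda$ ranges over the set of all positive dyadic numbers $\lambda\le\|\varphi\|_\infty$ and, for each such $\lambda$, $\iota$ ranges over an index set $\mathcal{I}_\lambda$, such that: (i) $|\mathcal{I}_\lambda|\le 10r\big(1+|I|\,C_r^{1/r}\lambda^{-1/r}\big)$ for every such $\lambda$; (ii) for every such $\lambda$, every $\iota\in\mathcal{I}_\lambda$ and every $x\in I_{\lambda,\iota}$ one has $\tfrac12\lambda<|\varphi(x)|<4\lambda$.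
   Context: A dyadic number is a number of the form $2^j$, $j\in\mathbb{Z}$. $|I|$ denotes the length of $I$ and $|\mathcal{I}_\lambda|$ the cardinality of the index set. *)

theory Defs
  imports "HOL-Analysis.Analysis"
begin

text \<open>Sup norm of a function on a set (for continuous functions on a compact interval
  this coincides with the L-infinity norm).\<close>
definition sup_norm_on :: "real set \<Rightarrow> (real \<Rightarrow> real) \<Rightarrow> real" where
  "sup_norm_on S g = (SUP x\<in>S. \<bar>g x\<bar>)"

definition dyadic_exps :: "real \<Rightarrow> int set" where
  "dyadic_exps M = {j::int. (2::real) powi j \<le> M}"

end

theory Submission
  imports Defs "HOL-Computational_Algebra.Polynomial"
begin


lemma count_sep_aux:
  fixes Z :: "real set"
  assumes Z: "finite Z"
  shows "\<And>S. finite S \<Longrightarrow> card S = n \<Longrightarrow> S \<noteq> {} \<Longrightarrow>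
     (\<forall>s\<in>S. \<forall>s'\<in>S. s < s' \<longrightarrow> 2 \<le> card (Z \<inter> {s<..<s'})) \<Longrightarrow>
     2 * card S \<le> card (Z \<inter> {..Max S}) + 2"
proof (induction n rule: less_induct)
  case (less n S)
  show ?case
  proof (cases "card S \<le> 1")
    case True then show ?thesis by simp
  next
    case False
    define m where "m = Max S"
    define S' where "S' = S - {m}"
    have mS: "m \<in> S" using less.prems m_def by simp
    have fS': "finite S'" and cS': "card S' = n - 1"
      using less.prems False mS by (auto simp: S'_def card_Diff_singleton)
    have ne: "S' \<noteq> {}"
    proof
      assume "S' = {}"
      then have "S \<subseteq> {m}" by (auto simp: S'_def)
      then have "card S \<le> card {m}" by (intro card_mono) auto
      then show False using False by simp
    qed
    define m' where "m' = Max S'"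
    have m'S: "m' \<in> S'" using fS' ne m'_def by simp
    have "m' \<le> m" using m'S less.prems m_def S'_def by auto
    moreover have "m' \<noteq> m" using m'S S'_def by auto
    ultimately have lt: "m' < m" by simp
    have IH: "2 * card S' \<le> card (Z \<inter> {..m'}) + 2"
      using less.IH[of "n - 1" S'] fS' cS' ne less.prems False m'_def
      by (auto simp: S'_def)
    have two: "2 \<le> card (Z \<inter> {m'<..<m})"
      using less.prems(4) mS m'S lt S'_def by auto
    have disj: "(Z \<inter> {..m'}) \<inter> (Z \<inter> {m'<..<m}) = {}" by auto
    have sub: "(Z \<inter> {..m'}) \<union> (Z \<inter> {m'<..<m}) \<subseteq> Z \<inter> {..m}" using lt by auto
    have "card (Z \<inter> {..m'}) + card (Z \<inter> {m'<..<m}) = card ((Z \<inter> {..m'}) \<union> (Z \<inter> {m'<..<m}))"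
      using Z disj by (simp add: card_Un_disjoint)
    also have "\<dots> \<le> card (Z \<inter> {..m})" using Z sub by (simp add: card_mono)
    finally have "card (Z \<inter> {..m'}) + card (Z \<inter> {m'<..<m}) \<le> card (Z \<inter> {..m})" .
    moreover have "card S = card S' + 1" using mS less.prems(1) S'_def
      by (metis False card.remove le_add1 add.commute plus_1_eq_Suc)
    ultimately show ?thesis using IH two unfolding m_def[symmetric] by linarith
  qed
qed

lemma count_sep:
  fixes S Z :: "real set"
  assumes "finite S" "finite Z" "\<forall>s\<in>S. \<forall>s'\<in>S. s < s' \<longrightarrow> 2 \<le> card (Z \<inter> {s<..<s'})"
  shows "2 * card S \<le> card Z + 2"
proof (cases "S = {}")
  case True then show ?thesis by simp
next
  case False
  have "2 * card S \<le> card (Z \<inter> {..Max S}) + 2"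
    using count_sep_aux[OF assms(2) assms(1) refl False assms(3)] .
  also have "\<dots> \<le> card Z + 2" using assms(2) by (simp add: card_mono)
  finally show ?thesis .
qed




definition hyst :: "real \<Rightarrow> (real \<Rightarrow> real) \<Rightarrow> real \<Rightarrow> real \<Rightarrow> bool" where
  "hyst a g x \<mu> \<longleftrightarrow> (\<exists>y\<in>{a..x}. 2*\<mu> \<le> g y \<and> (\<forall>z\<in>{y..x}. \<mu>/2 < g z))
      \<or> (\<mu> \<le> g a \<and> (\<forall>z\<in>{a..x}. \<mu>/2 < g z))"

definition Wset :: "real \<Rightarrow> real \<Rightarrow> (real \<Rightarrow> real) \<Rightarrow> real \<Rightarrow> real set" where
  "Wset a b g l = {x\<in>{a..b}. hyst a g x l \<and> \<not> hyst a g x (2*l)}"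

lemma hyst_mono: "\<mu>' \<le> \<mu> \<Longrightarrow> hyst a g x \<mu> \<Longrightarrow> hyst a g x \<mu>'"
  unfolding hyst_def by (smt (verit, ccfv_SIG) field_sum_of_halves)

lemma hyst_low: "hyst a g x \<mu> \<Longrightarrow> a \<le> x \<Longrightarrow> \<mu>/2 < g x"
  unfolding hyst_def by auto

lemma hyst_high: assumes "0 < l" "a \<le> x" "\<not> hyst a g x (2*l)" shows "g x < 4*l"
proof (rule ccontr)
  assume "\<not> g x < 4*l"
  then have "hyst a g x (2*l)" unfolding hyst_def using assms(1,2)
    by (intro disjI1 bexI[of _ x]) auto
  then show False using assms(3) by simp
qed

lemma W_band: "0 < l \<Longrightarrow> x \<in> Wset a b g l \<Longrightarrow> l/2 < g x \<and> g x < 4*l"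
  unfolding Wset_def using hyst_low hyst_high by auto

lemma ivt_g:
  fixes g :: "real \<Rightarrow> real" and a b u v y :: real
  assumes "continuous_on {a..b} g" "a \<le> u" "u \<le> v" "v \<le> b"
    "(g u \<le> y \<and> y \<le> g v) \<or> (g v \<le> y \<and> y \<le> g u)"
  shows "\<exists>c\<in>{u..v}. g c = y"
proof -
  have "{u..v} \<subseteq> {a..b}" using assms(2-4) by auto
  then have c: "continuous_on {u..v} g" by (intro continuous_on_subset[OF assms(1)])
  show ?thesis using assms(5) IVT'[of g u y v, OF _ _ assms(3) c] IVT2'[of g v y u, OF _ _ assms(3) c]
    by (metis atLeastAtMost_iff)
qed

lemma W_witness:
  assumes cont: "continuous_on {a..b} g" and x: "x \<in> Wset a b g l" and lpos: "0 < l"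
  shows "\<exists>c\<in>{a..x}. l \<le> g c \<and> g c \<le> 2*l"
proof -
  have xab: "a \<le> x" "x \<le> b" and h1: "hyst a g x l" and h2: "\<not> hyst a g x (2*l)"
    using x by (auto simp: Wset_def)
  consider "l \<le> g x \<and> g x \<le> 2*l" | "g x < l" | "g x > 2*l" by linarith
  then show ?thesis
  proof cases
    case 1 then show ?thesis using xab by auto
  next
    case 2
    from h1 show ?thesis unfolding hyst_def
    proof
      assume "\<exists>y\<in>{a..x}. 2*l \<le> g y \<and> (\<forall>z\<in>{y..x}. l/2 < g z)"
      then obtain y where y: "y \<in> {a..x}" "2*l \<le> g y" by auto
      have "l > 0" using hyst_low[OF h1 xab(1)] 2 by linarith
      then obtain c where "c\<in>{y..x}" "g c = l" using ivt_g[OF cont, of y x l] y xab 2 by auto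
      then show ?thesis using y \<open>l > 0\<close> by (intro bexI[of _ c]) auto
    next
      assume "l \<le> g a \<and> (\<forall>z\<in>{a..x}. l/2 < g z)"
      then obtain c where "c\<in>{a..x}" "g c = l" using ivt_g[OF cont, of a x l] xab 2 by auto
      moreover have "l > 0" using hyst_low[OF h1 xab(1)] 2 by linarith
      ultimately show ?thesis by auto
    qed
  next
    case 3
    show ?thesis
    proof (cases "\<exists>w\<in>{a..x}. g w \<le> l")
      case True
      then obtain w where w: "w \<in> {a..x}" "g w \<le> l" by auto
      have "l > 0" using lpos .
      obtain c where "c\<in>{w..x}" "g c = 2*l" using ivt_g[OF cont, of w x "2*l"] w xab 3 \<open>l>0\<close> by auto
      then show ?thesis using w \<open>l>0\<close> by (intro bexI[of _ c]) auto
    next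
      case False
      then have gt: "\<forall>w\<in>{a..x}. l < g w" by force
      show ?thesis
      proof (cases "g a \<le> 2*l")
        case True
        have "l < g a" using gt xab by auto
        then show ?thesis using True xab by (intro bexI[of _ a]) auto
      next
        case False
        then have "hyst a g x (2*l)" unfolding hyst_def using gt by auto
        then show ?thesis using h2 by simp
      qed
    qed
  qed
qed

lemma W_exit_core:
  assumes cont: "continuous_on {a..b} g" and x: "x \<in> Wset a b g l" and lpos: "0 < l"
    and z: "a \<le> z" "z \<le> x" and ex: "g z \<le> l/2 \<or> 4*l \<le> g z"
  shows "\<exists>c\<in>{z..x}. l \<le> g c \<and> g c \<le> 2*l"
proof -
  have xab: "a \<le> x" "x \<le> b" and h1: "hyst a g x l" and h2: "\<not> hyst a g x (2*l)"
    using x by (auto simp: Wset_def)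
  from ex show ?thesis
  proof
    assume low: "g z \<le> l/2"
    from h1 show ?thesis unfolding hyst_def
    proof
      assume "\<exists>y\<in>{a..x}. 2*l \<le> g y \<and> (\<forall>w\<in>{y..x}. l/2 < g w)"
      then obtain y where y: "y \<in> {a..x}" "2*l \<le> g y" "\<forall>w\<in>{y..x}. l/2 < g w" by auto
      have "z < y" using y(3) low z by (metis atLeastAtMost_iff linorder_not_le order.strict_iff_not)
      then obtain c where "c\<in>{z..y}" "g c = l" using ivt_g[OF cont, of z y l] y xab z low lpos by auto
      then show ?thesis using y lpos by (intro bexI[of _ c]) auto
    next
      assume "l \<le> g a \<and> (\<forall>w\<in>{a..x}. l/2 < g w)"
      then have "l/2 < g z" using z by auto
      then show ?thesis using low by linarith
    qed
  next
    assume high: "4*l \<le> g z"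
    show ?thesis
    proof (cases "g x \<le> 2*l")
      case True
      obtain c where "c\<in>{z..x}" "g c = 2*l" using ivt_g[OF cont, of z x "2*l"] xab z high True lpos by auto
      then show ?thesis using lpos by (intro bexI[of _ c]) auto
    next
      case False
      have "\<not> (\<forall>w\<in>{z..x}. l < g w)"
        using h2 high z unfolding hyst_def by auto
      then obtain w where w: "w \<in> {z..x}" "g w \<le> l" by force
      obtain c where "c\<in>{z..w}" "g c = 2*l" using ivt_g[OF cont, of z w "2*l"] xab z high w lpos by auto
      then show ?thesis using lpos w by (intro bexI[of _ c]) auto
    qed
  qed
qed

lemma W_convex:
  assumes x1: "x1 \<in> Wset a b g l" and x2: "x2 \<in> Wset a b g l" and le: "x1 \<le> x2"
    and band: "\<forall>z\<in>{x1..x2}. l/2 < g z \<and> g z < 4*l"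
  shows "{x1..x2} \<subseteq> Wset a b g l"
proof
  fix z assume z: "z \<in> {x1..x2}"
  have x1ab: "a \<le> x1" "x1 \<le> b" and h1: "hyst a g x1 l" and h2: "\<not> hyst a g x1 (2*l)"
    using x1 by (auto simp: Wset_def)
  have x2ab: "x2 \<le> b" using x2 by (auto simp: Wset_def)
  have "hyst a g z l"
    using h1 z band unfolding hyst_def
    by (smt (verit, del_insts) atLeastAtMost_iff)
  moreover have "\<not> hyst a g z (2*l)"
  proof
    assume "hyst a g z (2*l)"
    then show False unfolding hyst_def
    proof
      assume "\<exists>y\<in>{a..z}. 2*(2*l) \<le> g y \<and> (\<forall>w\<in>{y..z}. (2*l)/2 < g w)"
      then obtain y where y: "y\<in>{a..z}" "2*(2*l) \<le> g y" "\<forall>w\<in>{y..z}. (2*l)/2 < g w" by auto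
      have "y < x1"
      proof (rule ccontr)
        assume "\<not> y < x1"
        then have "y \<in> {x1..x2}" using y z by auto
        then have "g y < 4*l" using band by blast
        then show False using y by linarith
      qed
      then have "hyst a g x1 (2*l)" unfolding hyst_def using y z by auto
      then show False using h2 by simp
    next
      assume "2*l \<le> g a \<and> (\<forall>w\<in>{a..z}. (2*l)/2 < g w)"
      then have "hyst a g x1 (2*l)" unfolding hyst_def using z by auto
      then show False using h2 by simp
    qed
  qed
  ultimately show "z \<in> Wset a b g l" using z x1ab x2ab unfolding Wset_def by auto
qed

lemma W_sep:
  assumes x1: "x1 \<in> Wset a b g l" and x2: "x2 \<in> Wset a b g l" and le: "x1 \<le> x2"
    and ne: "connected_component_set (Wset a b g l) x1 \<noteq> connected_component_set (Wset a b g l) x2"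
  shows "\<exists>z\<in>{x1..x2}. g z \<le> l/2 \<or> 4*l \<le> g z"
proof (rule ccontr)
  assume "\<not> ?thesis"
  then have "\<forall>z\<in>{x1..x2}. l/2 < g z \<and> g z < 4*l" by force
  then have "{x1..x2} \<subseteq> Wset a b g l" using W_convex[OF x1 x2 le] by blast
  then have "connected_component (Wset a b g l) x1 x2"
    by (intro connected_componentI[of "{x1..x2}"]) (use le in auto)
  then have "x2 \<in> connected_component_set (Wset a b g l) x1" by simp
  then show False using ne connected_component_eq by metis
qed




lemma ivt_strict:
  fixes h :: "real \<Rightarrow> real"
  assumes c: "continuous_on {u..v} h" and uv: "u \<le> v"
    and y: "(h u < y \<and> y < h v) \<or> (h v < y \<and> y < h u)"
  shows "\<exists>x\<in>{u<..<v}. h x = y"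
proof -
  have "(h u \<le> y \<and> y \<le> h v) \<or> (h v \<le> y \<and> y \<le> h u)" using y by linarith
  then obtain x where x: "x \<in> {u..v}" "h x = y" using ivt_g[OF c order_refl uv order_refl] by blast
  have "x \<noteq> u" using x(2) y by auto
  moreover have "x \<noteq> v" using x(2) y by auto
  ultimately show ?thesis using x by (intro bexI[of _ x]) auto
qed

lemma cross:
  fixes h :: "real \<Rightarrow> real"
  assumes c: "continuous_on {u..v} h" and uv: "u \<le> v"
    and cv: "(c1 < h u \<and> h u < c2 \<and> (h v < c1 \<or> c2 < h v)) \<or> (c1 < h v \<and> h v < c2 \<and> (h u < c1 \<or> c2 < h u))"
  shows "\<exists>x\<in>{u<..<v}. h x = c1 \<or> h x = c2"
proof -
  have "((h u < c1 \<and> c1 < h v) \<or> (h v < c1 \<and> c1 < h u)) \<or> ((h u < c2 \<and> c2 < h v) \<or> (h v < c2 \<and> c2 < h u))"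
    using cv by auto
  then show ?thesis
  proof
    assume "(h u < c1 \<and> c1 < h v) \<or> (h v < c1 \<and> c1 < h u)"
    then show ?thesis using ivt_strict[OF c uv] by blast
  next
    assume "(h u < c2 \<and> c2 < h v) \<or> (h v < c2 \<and> c2 < h u)"
    then show ?thesis using ivt_strict[OF c uv] by blast
  qed
qed

lemma piece_count:
  fixes \<phi> :: "real \<Rightarrow> real" and p :: "real poly" and l u v :: real
  assumes deg: "degree p \<le> n" and lpos: "0 < l"
    and approx: "\<forall>x\<in>{u..v}. \<bar>\<phi> x - poly p x\<bar> \<le> l/5"
    and D: "finite D" "D \<subseteq> {u..v}" "\<forall>d\<in>D. l \<le> \<bar>\<phi> d\<bar> \<and> \<bar>\<phi> d\<bar> \<le> 2*l"
    and sep: "\<forall>d\<in>D. \<forall>d'\<in>D. d < d' \<longrightarrow> (\<exists>z. d < z \<and> z < d' \<and> (\<bar>\<phi> z\<bar> \<le> l/2 \<or> 4*l \<le> \<bar>\<phi> z\<bar>))"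
  shows "card D \<le> 2*n + 1"
proof (cases "D = {}")
  case True then show ?thesis by simp
next
  case False
  define c1 where "c1 = 3*l/4"
  define c2 where "c2 = 3*l"
  define Q where "Q = (p*p - [:c1^2:]) * (p*p - [:c2^2:])"
  define h where "h = (\<lambda>x. \<bar>poly p x\<bar>)"
  have hc: "continuous_on S h" for S unfolding h_def by (intro continuous_intros)
  have Qroot: "poly Q x = 0" if "h x = c1 \<or> h x = c2" for x
  proof -
    have "(h x)^2 = c1^2 \<or> (h x)^2 = c2^2" using that by auto
    then have "(poly p x)^2 = c1^2 \<or> (poly p x)^2 = c2^2" unfolding h_def by simp
    then show ?thesis unfolding Q_def by (auto simp: power2_eq_square)
  qed
  have core: "c1 < h d \<and> h d < c2" if "d \<in> D" for d
  proof -
    have "\<bar>\<phi> d - poly p d\<bar> \<le> l/5" using approx D(2) that by auto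
    moreover have "l \<le> \<bar>\<phi> d\<bar>" "\<bar>\<phi> d\<bar> \<le> 2*l" using D(3) that by auto
    moreover have "\<bar>\<phi> d\<bar> - \<bar>\<phi> d - poly p d\<bar> \<le> \<bar>poly p d\<bar>"
      using abs_triangle_ineq2[of "\<phi> d" "\<phi> d - poly p d"] by simp
    moreover have "\<bar>poly p d\<bar> \<le> \<bar>\<phi> d\<bar> + \<bar>\<phi> d - poly p d\<bar>"
      using abs_triangle_ineq2[of "poly p d" "\<phi> d"] abs_minus_commute[of "poly p d" "\<phi> d"] by linarith
    ultimately show ?thesis using lpos unfolding h_def c1_def c2_def by linarith
  qed
  have exit: "h z < c1 \<or> c2 < h z" if "z \<in> {u..v}" "\<bar>\<phi> z\<bar> \<le> l/2 \<or> 4*l \<le> \<bar>\<phi> z\<bar>" for z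
  proof -
    have "\<bar>\<phi> z - poly p z\<bar> \<le> l/5" using approx that by auto
    moreover have "\<bar>\<phi> z\<bar> - \<bar>\<phi> z - poly p z\<bar> \<le> \<bar>poly p z\<bar>"
      using abs_triangle_ineq2[of "\<phi> z" "\<phi> z - poly p z"] by simp
    moreover have "\<bar>poly p z\<bar> \<le> \<bar>\<phi> z\<bar> + \<bar>\<phi> z - poly p z\<bar>"
      using abs_triangle_ineq2[of "poly p z" "\<phi> z"] abs_minus_commute[of "poly p z" "\<phi> z"] by linarith
    ultimately show ?thesis using that(2) lpos unfolding h_def c1_def c2_def
      by (elim disjE) linarith+
  qed
  obtain d0 where d0: "d0 \<in> D" using False by auto
  have "poly Q d0 \<noteq> 0"
  proof
    assume "poly Q d0 = 0"
    then have "(poly p d0)^2 = c1^2 \<or> (poly p d0)^2 = c2^2" unfolding Q_def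
      by (auto simp: power2_eq_square)
    then have sq: "(h d0)^2 = c1^2 \<or> (h d0)^2 = c2^2" unfolding h_def by simp
    have "0 \<le> h d0" "0 \<le> c1" "0 \<le> c2" unfolding h_def c1_def c2_def using lpos by auto
    then have "h d0 = c1 \<or> h d0 = c2" using sq power2_eq_iff_nonneg by metis
    then show False using core[OF d0] by auto
  qed
  then have Qnz: "Q \<noteq> 0" by auto
  define Z where "Z = {x. poly Q x = 0}"
  have fZ: "finite Z" unfolding Z_def using Qnz by (rule poly_roots_finite)
  have "card Z \<le> degree Q" unfolding Z_def using Qnz by (rule card_poly_roots_bound)
  also have "degree Q \<le> 4*n"
  proof -
    have "degree (p*p - [:c1^2:]) \<le> 2*n"
      using degree_diff_le[of "p*p" "2*n" "[:c1^2:]"] degree_mult_le[of p p] deg by auto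
    moreover have "degree (p*p - [:c2^2:]) \<le> 2*n"
      using degree_diff_le[of "p*p" "2*n" "[:c2^2:]"] degree_mult_le[of p p] deg by auto
    ultimately show ?thesis unfolding Q_def using degree_mult_le[of "p*p - [:c1^2:]" "p*p - [:c2^2:]"]
      by linarith
  qed
  finally have cZ: "card Z \<le> 4*n" .
  have two: "2 \<le> card (Z \<inter> {d<..<d'})" if dd: "d \<in> D" "d' \<in> D" "d < d'" for d d'
  proof -
    obtain z where z: "d < z" "z < d'" "\<bar>\<phi> z\<bar> \<le> l/2 \<or> 4*l \<le> \<bar>\<phi> z\<bar>" using sep[rule_format, OF dd] by blast
    have "d \<in> {u..v}" "d' \<in> {u..v}" using dd(1,2) D(2) by blast+
    then have zuv: "z \<in> {u..v}" using z(1,2) by simp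
    have ez: "h z < c1 \<or> c2 < h z" using exit[OF zuv z(3)] .
    have cd: "c1 < h d \<and> h d < c2" using core[OF dd(1)] .
    have cd': "c1 < h d' \<and> h d' < c2" using core[OF dd(2)] .
    have A1: "(c1 < h d \<and> h d < c2 \<and> (h z < c1 \<or> c2 < h z)) \<or> (c1 < h z \<and> h z < c2 \<and> (h d < c1 \<or> c2 < h d))"
      using cd ez by blast
    have A2: "(c1 < h z \<and> h z < c2 \<and> (h d' < c1 \<or> c2 < h d')) \<or> (c1 < h d' \<and> h d' < c2 \<and> (h z < c1 \<or> c2 < h z))"
      using cd' ez by blast
    obtain x1 where x1: "x1 \<in> {d<..<z}" "h x1 = c1 \<or> h x1 = c2"
      using cross[OF hc[of "{d..z}"] less_imp_le[OF z(1)] A1] by blast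
    obtain x2 where x2: "x2 \<in> {z<..<d'}" "h x2 = c1 \<or> h x2 = c2"
      using cross[OF hc[of "{z..d'}"] less_imp_le[OF z(2)] A2] by blast
    have "x1 \<in> Z" "x2 \<in> Z" using Qroot[OF x1(2)] Qroot[OF x2(2)] unfolding Z_def by simp_all
    moreover have "x1 \<in> {d<..<d'}" "x2 \<in> {d<..<d'}" using x1(1) x2(1) z(1,2) by auto
    ultimately have sub: "{x1, x2} \<subseteq> Z \<inter> {d<..<d'}" by blast
    have "x1 < x2" using x1(1) x2(1) by auto
    then have "x1 \<noteq> x2" by simp
    have "card {x1, x2} \<le> card (Z \<inter> {d<..<d'})" using fZ sub by (intro card_mono) simp_all
    then show ?thesis using \<open>x1 \<noteq> x2\<close> by simp
  qed
  have "\<forall>s\<in>D. \<forall>s'\<in>D. s < s' \<longrightarrow> 2 \<le> card (Z \<inter> {s<..<s'})"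
    using two by simp
  then have "2 * card D \<le> card Z + 2" by (rule count_sep[OF D(1) fZ])
  then show ?thesis using cZ by linarith
qed




lemma delta_bound:
  fixes C l a b N :: real and r :: nat
  assumes C: "0 \<le> C" and l: "0 < l" and ab: "a \<le> b" and r: "1 \<le> r" and N: "0 < N"
    and NL: "5 * ((b - a) * C powr (1 / real r) * l powr (- 1 / real r)) \<le> N"
  shows "C * ((b - a) / N) ^ r \<le> l / 5"
proof (cases "C = 0 \<or> a = b")
  case True then show ?thesis using l r by (auto simp: power_0_left)
next
  case False
  then have Cp: "0 < C" and abp: "a < b" using C ab by auto
  define k where "k = C powr (1 / real r) * l powr (- 1 / real r)"
  have kp: "0 < k" unfolding k_def using Cp l by simp
  have kr: "k ^ r = C / l"
  proof -
    have "k ^ r = (C powr (1 / real r)) ^ r * (l powr (- 1 / real r)) ^ r"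
      unfolding k_def by (simp add: power_mult_distrib)
    also have "\<dots> = C powr (real r * (1 / real r)) * l powr (real r * (- 1 / real r))"
      using Cp l by (simp add: powr_power)
    also have "\<dots> = C powr 1 * l powr (-1)" using r by simp
    also have "\<dots> = C / l" using Cp l by (simp add: powr_minus divide_inverse)
    finally show ?thesis .
  qed
  have NL': "5 * ((b - a) * k) \<le> N" using NL by (simp add: k_def mult.assoc)
  have d: "(b - a) / N \<le> 1 / (5 * k)"
    using NL' kp N abp by (simp add: field_simps)
  have d0: "0 \<le> (b - a) / N" using abp N by simp
  have "((b - a) / N) ^ r \<le> (1 / (5 * k)) ^ r" using d d0 by (rule power_mono)
  also have "\<dots> = 1 / (5 ^ r * (C / l))" by (simp add: power_mult_distrib power_divide kr)
  finally have A: "((b - a) / N) ^ r \<le> 1 / (5 ^ r * (C / l))" .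
  have "C * ((b - a) / N) ^ r \<le> C * (1 / (5 ^ r * (C / l)))"
    by (rule mult_left_mono[OF A]) (use Cp in linarith)
  also have "\<dots> = l / 5 ^ r" using Cp l by (simp add: field_simps)
  also have "\<dots> \<le> l / 5"
  proof -
    have "(5::real) ^ 1 \<le> 5 ^ r" using r by (intro power_increasing) auto
    then show ?thesis using l by (intro divide_left_mono) auto
  qed
  finally show ?thesis .
qed

lemma cover:
  fixes g :: "real \<Rightarrow> real"
  assumes x: "x \<in> {a..b}" and gx: "0 < g x"
  shows "\<exists>j::int. x \<in> Wset a b g (2 powi j)"
proof (rule ccontr)
  assume no: "\<not> ?thesis"
  obtain n1 :: nat where n1: "2 * g x < 2 ^ n1" using real_arch_pow[of 2 "2 * g x"] by auto
  obtain n2 :: nat where n2: "2 / g x < 2 ^ n2" using real_arch_pow[of 2 "2 / g x"] by auto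
  have base: "hyst a g x (2 powi (- int n2))"
  proof -
    have e: "(2::real) powi (- int n2) = 1 / 2 ^ n2" by (simp add: power_int_minus divide_inverse)
    have h2: "2 < g x * 2 ^ n2" using n2 gx by (simp add: field_simps)
    then have "2 * (1 / 2 ^ n2) \<le> g x" by (simp add: field_simps)
    moreover have "(1 / 2 ^ n2) / 2 < g x"
    proof -
      have "g x * (2 * 2 ^ n2) = 2 * (g x * 2 ^ n2)" by simp
      then have "1 < g x * (2 * 2 ^ n2)" using h2 by linarith
      then show ?thesis by (simp add: field_simps)
    qed
    ultimately show ?thesis unfolding hyst_def e using x by (intro disjI1 bexI[of _ x]) auto
  qed
  have step: "\<forall>k\<ge>- int n2. hyst a g x (2 powi k)"
  proof (intro allI impI)
    fix k assume "- int n2 \<le> k"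
    then show "hyst a g x (2 powi k)"
    proof (induction k rule: int_ge_induct)
      case base then show ?case using \<open>hyst a g x (2 powi (- int n2))\<close> .
    next
      case (step i)
      have "(2::real) powi (i + 1) = 2 * 2 powi i" by (simp add: power_int_add_1')
      then show ?case using step.IH no x unfolding Wset_def by auto
    qed
  qed
  have "hyst a g x (2 powi (int n1))" using step[rule_format, of "int n1"] by simp
  then have "(2::real) ^ n1 / 2 < g x" using hyst_low x by fastforce
  then show False using n1 by simp
qed




lemma pieces_cover:
  fixes a b d :: real and N :: nat
  assumes N: "0 < N" and d: "d \<in> {a..b}"
  shows "\<exists>m<N. d \<in> {a + real m * ((b - a) / N) .. a + real (m+1) * ((b - a) / N)}"
proof (cases "a = b")
  case True then show ?thesis using N d by (intro exI[of _ 0]) auto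
next
  case False
  define \<delta> where "\<delta> = (b - a) / N"
  have dp: "0 < \<delta>" using False d N unfolding \<delta>_def by auto
  have bN: "b - a = real N * \<delta>" using N unfolding \<delta>_def by simp
  define k where "k = nat \<lfloor>(d - a) / \<delta>\<rfloor>"
  have k0: "0 \<le> (d - a) / \<delta>" using d dp by simp
  have kk: "real k = real_of_int \<lfloor>(d - a) / \<delta>\<rfloor>" unfolding k_def using k0 by simp
  have k1: "real k \<le> (d - a) / \<delta>" unfolding kk by simp
  have k2: "(d - a) / \<delta> < real k + 1" unfolding kk by simp
  show ?thesis
  proof (cases "k \<le> N - 1")
    case True
    have "real k * \<delta> \<le> d - a" using k1 dp by (simp add: field_simps)
    moreover have "d - a \<le> (real k + 1) * \<delta>" using k2 dp by (simp add: field_simps)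
    ultimately show ?thesis using True N unfolding \<delta>_def[symmetric]
      by (intro exI[of _ k]) (auto simp: algebra_simps)
  next
    case False
    have "real (N - 1) \<le> real k" using False by simp
    then have "real (N - 1) * \<delta> \<le> real k * \<delta>" using dp by (simp add: mult_right_mono)
    also have "\<dots> \<le> d - a" using k1 dp by (simp add: field_simps)
    finally have "real (N - 1) * \<delta> \<le> d - a" .
    moreover have "d - a \<le> real (N - 1 + 1) * \<delta>" using N d bN by simp
    ultimately show ?thesis using N unfolding \<delta>_def[symmetric]
      by (intro exI[of _ "N - 1"]) (auto simp: algebra_simps)
  qed
qed




lemma level_count:
  fixes \<phi> :: "real \<Rightarrow> real" and a b l :: real and N n :: nat
  defines "g \<equiv> (\<lambda>x. \<bar>\<phi> x\<bar>)"
  defines "W \<equiv> Wset a b g l"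
  assumes cont: "continuous_on {a..b} g" and lpos: "0 < l" and ab: "a \<le> b"
    and N: "0 < N"
    and approx: "\<forall>m<N. \<exists>p. degree p \<le> n \<and> (\<forall>x\<in>{a + real m * ((b - a) / N) .. a + real (m+1) * ((b - a) / N)}. \<bar>\<phi> x - poly p x\<bar> \<le> l/5)"
    and F: "F \<subseteq> connected_component_set W ` W" "finite F"
  shows "card F \<le> (2*n+1)*N"
proof -
  define xr where "xr P = (SOME x. x \<in> W \<and> P = connected_component_set W x)" for P
  have xr: "xr P \<in> W \<and> P = connected_component_set W (xr P)" if "P \<in> F" for P
  proof -
    have "\<exists>x. x \<in> W \<and> P = connected_component_set W x" using F(1) that by blast
    then show ?thesis unfolding xr_def by (rule someI_ex)
  qed
  define CS where "CS P = {c \<in> {a..xr P}. l \<le> g c \<and> g c \<le> 2*l}" for P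
  define cs where "cs P = Sup (CS P)" for P
  have cs: "cs P \<in> CS P" "\<forall>c\<in>CS P. c \<le> cs P" if "P \<in> F" for P
  proof -
    have xW: "xr P \<in> W" using conjunct1[OF xr[OF that]] .
    obtain c0 where c0: "c0 \<in> {a..xr P}" "l \<le> g c0" "g c0 \<le> 2*l"
      using W_witness[OF cont xW[unfolded W_def] lpos] by blast
    have c0CS: "c0 \<in> CS P" unfolding CS_def using c0 by simp
    then have ne: "CS P \<noteq> {}" by blast
    have bdd: "bdd_above (CS P)" unfolding CS_def by (rule bdd_aboveI[of _ "xr P"]) simp
    have xb: "xr P \<le> b" using xW unfolding W_def Wset_def by simp
    have "{a..xr P} \<subseteq> {a..b}" using xb by simp
    then have "continuous_on {a..xr P} g" by (rule continuous_on_subset[OF cont])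
    then have "closed ({a..xr P} \<inter> g -` {l..2*l})"
      by (rule continuous_closed_preimage[OF _ closed_atLeastAtMost closed_atLeastAtMost])
    moreover have "CS P = {a..xr P} \<inter> g -` {l..2*l}" unfolding CS_def by auto
    ultimately have "closed (CS P)" by simp
    then show "cs P \<in> CS P" unfolding cs_def by (rule closed_contains_Sup[OF ne bdd])
    show "\<forall>c\<in>CS P. c \<le> cs P" unfolding cs_def using bdd by (simp add: cSup_upper)
  qed
  have key: "\<exists>z. cs P < z \<and> z < cs P' \<and> (g z \<le> l/2 \<or> 4*l \<le> g z)"
    if PF: "P \<in> F" "P' \<in> F" and lt: "xr P < xr P'" for P P'
  proof -
    have x1: "xr P \<in> W" using conjunct1[OF xr[OF PF(1)]] .
    have x2: "xr P' \<in> W" using conjunct1[OF xr[OF PF(2)]] .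
    have "P \<noteq> P'" using lt by auto
    then have ne: "connected_component_set W (xr P) \<noteq> connected_component_set W (xr P')"
      by (metis xr[OF PF(1)] xr[OF PF(2)])
    obtain z where z: "z \<in> {xr P..xr P'}" "g z \<le> l/2 \<or> 4*l \<le> g z"
      using W_sep[OF x1[unfolded W_def] x2[unfolded W_def] less_imp_le[OF lt] ne[unfolded W_def]] by blast
    have xa: "a \<le> xr P" using x1 unfolding W_def Wset_def by auto
    obtain c where c: "c \<in> {z..xr P'}" "l \<le> g c" "g c \<le> 2*l"
      using W_exit_core[OF cont _ lpos, of "xr P'" z] x2 z xa unfolding W_def by auto
    have "c \<in> CS P'" using c z xa unfolding CS_def by auto
    then have "c \<le> cs P'" using cs(2)[OF PF(2)] by auto
    moreover have "cs P \<le> xr P" using cs(1)[OF PF(1)] unfolding CS_def by auto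
    moreover have "g (cs P) \<ge> l" "g (cs P) \<le> 2*l" using cs(1)[OF PF(1)] unfolding CS_def by auto
    ultimately have le1: "cs P \<le> z" and le2: "z \<le> c" and le3: "c \<le> cs P'"
      and g1: "l \<le> g (cs P)" "g (cs P) \<le> 2*l" using z c by auto
    have "cs P \<noteq> z" using z(2) g1 lpos by (elim disjE) auto
    moreover have "c \<noteq> z" using z(2) c(2,3) lpos by (elim disjE) auto
    ultimately have "cs P < z" "z < cs P'" using le1 le2 le3 by auto
    then show ?thesis using z(2) by blast
  qed
  have inj: "inj_on cs F"
  proof
    fix P P' assume PF: "P \<in> F" "P' \<in> F" and eq: "cs P = cs P'"
    show "P = P'"
    proof (rule ccontr)
      assume "P \<noteq> P'"
      then have "xr P \<noteq> xr P'" by (metis xr[OF PF(1)] xr[OF PF(2)])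
      then consider "xr P < xr P'" | "xr P' < xr P" by linarith
      then show False
      proof cases
        case 1
        then obtain z where "cs P < z" "z < cs P'" using key[OF PF] by blast
        then show False using eq by simp
      next
        case 2
        then obtain z where "cs P' < z" "z < cs P" using key[OF PF(2,1)] by blast
        then show False using eq by simp
      qed
    qed
  qed
  define D where "D = cs ` F"
  have cD: "card D = card F" unfolding D_def using inj by (rule card_image)
  have fD: "finite D" unfolding D_def using F(2) by simp
  have Dab: "D \<subseteq> {a..b}"
  proof
    fix d assume "d \<in> D"
    then obtain P where P: "P \<in> F" "d = cs P" unfolding D_def by auto
    have "xr P \<le> b" using conjunct1[OF xr[OF P(1)]] unfolding W_def Wset_def by auto
    then show "d \<in> {a..b}" using cs(1)[OF P(1)] P unfolding CS_def by auto
  qed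
  have Dcore: "\<forall>d\<in>D. l \<le> \<bar>\<phi> d\<bar> \<and> \<bar>\<phi> d\<bar> \<le> 2*l"
  proof
    fix d assume "d \<in> D"
    then obtain P where P: "P \<in> F" "d = cs P" unfolding D_def by auto
    have "cs P \<in> CS P" using cs(1)[OF P(1)] .
    then have "l \<le> g (cs P) \<and> g (cs P) \<le> 2*l" unfolding CS_def by simp
    then show "l \<le> \<bar>\<phi> d\<bar> \<and> \<bar>\<phi> d\<bar> \<le> 2*l" unfolding P(2) g_def .
  qed
  have Dsep: "\<forall>d\<in>D. \<forall>d'\<in>D. d < d' \<longrightarrow> (\<exists>z. d < z \<and> z < d' \<and> (\<bar>\<phi> z\<bar> \<le> l/2 \<or> 4*l \<le> \<bar>\<phi> z\<bar>))"
  proof (intro ballI impI)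
    fix d d' assume "d \<in> D" "d' \<in> D" "d < d'"
    then obtain P P' where P: "P \<in> F" "P' \<in> F" "d = cs P" "d' = cs P'" unfolding D_def by auto
    have "xr P \<noteq> xr P'"
    proof
      assume "xr P = xr P'"
      then have "P = P'" by (metis xr[OF P(1)] xr[OF P(2)])
      then show False using P \<open>d < d'\<close> by simp
    qed
    moreover have "\<not> xr P' < xr P"
    proof
      assume "xr P' < xr P"
      then obtain z where "cs P' < z" "z < cs P" using key[OF P(2,1)] by blast
      then show False using P \<open>d < d'\<close> by simp
    qed
    ultimately have "xr P < xr P'" by linarith
    then show "\<exists>z. d < z \<and> z < d' \<and> (\<bar>\<phi> z\<bar> \<le> l/2 \<or> 4*l \<le> \<bar>\<phi> z\<bar>)"
      using key[OF P(1,2)] P unfolding g_def by blast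
  qed
  define pc where "pc m = {a + real m * ((b - a) / N) .. a + real (m+1) * ((b - a) / N)}" for m :: nat
  have "D \<subseteq> (\<Union>m<N. D \<inter> pc m)"
  proof
    fix d assume "d \<in> D"
    then have "d \<in> {a..b}" using Dab by blast
    from pieces_cover[OF N this] obtain m where m: "m < N"
      "d \<in> {a + real m * ((b - a) / N) .. a + real (m+1) * ((b - a) / N)}" by blast
    then have "m < N" "d \<in> pc m" unfolding pc_def by simp_all
    then show "d \<in> (\<Union>m<N. D \<inter> pc m)" using \<open>d \<in> D\<close> by blast
  qed
  then have "card D \<le> card (\<Union>m<N. D \<inter> pc m)" by (intro card_mono) (auto intro: fD)
  also have "\<dots> \<le> (\<Sum>m<N. card (D \<inter> pc m))" by (rule card_UN_le) simp
  also have "\<dots> \<le> (\<Sum>m<N. 2*n+1)"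
  proof (rule sum_mono)
    fix m assume m: "m \<in> {..<N}"
    obtain p where p: "degree p \<le> n" "\<forall>x\<in>pc m. \<bar>\<phi> x - poly p x\<bar> \<le> l/5"
      using approx m unfolding pc_def by auto
    show "card (D \<inter> pc m) \<le> 2*n+1"
    proof (rule piece_count[OF p(1) lpos p(2)[unfolded pc_def]])
      show "finite (D \<inter> pc m)" using fD by simp
      show "D \<inter> pc m \<subseteq> {a + real m * ((b - a) / real N)..a + real (m + 1) * ((b - a) / real N)}"
        unfolding pc_def by blast
      show "\<forall>d\<in>D \<inter> pc m. l \<le> \<bar>\<phi> d\<bar> \<and> \<bar>\<phi> d\<bar> \<le> 2 * l" using Dcore by blast
      show "\<forall>d\<in>D \<inter> pc m. \<forall>d'\<in>D \<inter> pc m. d < d' \<longrightarrow> (\<exists>z>d. z < d' \<and> (\<bar>\<phi> z\<bar> \<le> l / 2 \<or> 4 * l \<le> \<bar>\<phi> z\<bar>))"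
        using Dsep by blast
    qed
  qed
  also have "\<dots> = (2*n+1)*N" by simp
  finally show ?thesis using cD by simp
qed




lemma taylor_piece:
  fixes f :: "nat \<Rightarrow> real \<Rightarrow> real" and \<phi> :: "real \<Rightarrow> real" and C t :: real
  assumes r: "r = Suc n"
    and f0: "\<forall>x\<in>{a..b}. f 0 x = \<phi> x"
    and der: "\<forall>k<r. \<forall>x\<in>{a..b}. (f k has_real_derivative f (Suc k) x) (at x within {a..b})"
    and bd: "\<forall>x\<in>{a..b}. \<bar>f r x\<bar> \<le> C"
    and t: "t \<in> {a..b}"
  shows "\<exists>p. degree p \<le> n \<and> (\<forall>x\<in>{a..b}. \<bar>\<phi> x - poly p x\<bar> \<le> C * \<bar>x - t\<bar> ^ r / fact n)"
proof -
  define p where "p = (\<Sum>i\<le>n. smult (f i t / fact i) ([:-t, 1:] ^ i))"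
  have "degree p \<le> n" unfolding p_def
  proof (rule degree_sum_le)
    fix i assume "i \<in> {..n}"
    then have "degree ([:-t, 1:] ^ i) \<le> n" by (simp add: degree_linear_power)
    then show "degree (smult (f i t / fact i) ([:-t, 1:] ^ i)) \<le> n"
      using degree_smult_le order_trans by blast
  qed simp
  moreover have "\<bar>\<phi> x - poly p x\<bar> \<le> C * \<bar>x - t\<bar> ^ r / fact n" if x: "x \<in> {a..b}" for x
  proof -
    have pe: "poly p x = (\<Sum>i\<le>n. f i t * (x - t) ^ i / fact i)"
      unfolding p_def poly_sum by (simp add: poly_power)
    have "norm (f 0 x - (\<Sum>i\<le>n. f i t * (x - t) ^ i / fact i)) \<le> C * norm (x - t) ^ Suc n / fact n"
    proof (rule field_Taylor[where S = "{a..b}" and f = f])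
      show "convex {a..b}" by (rule convex_real_interval)
      show "(f i has_field_derivative f (Suc i) y) (at y within {a..b})" if "y \<in> {a..b}" "i \<le> n" for i y
        using der that r by auto
      show "norm (f (Suc n) y) \<le> C" if "y \<in> {a..b}" for y using bd that r by auto
    qed (use t x in auto)
    then show ?thesis using f0 x r pe by simp
  qed
  ultimately show ?thesis by blast
qed





lemma sup_norm_bound:
  fixes h :: "real \<Rightarrow> real"
  assumes "continuous_on {a..b} h" "x \<in> {a..b}"
  shows "\<bar>h x\<bar> \<le> sup_norm_on {a..b} h"
proof -
  have "continuous_on {a..b} (\<lambda>x. \<bar>h x\<bar>)" using assms(1) by (intro continuous_intros)
  then have "compact ((\<lambda>x. \<bar>h x\<bar>) ` {a..b})" by (rule compact_continuous_image) simp
  then have "bdd_above ((\<lambda>x. \<bar>h x\<bar>) ` {a..b})" by (intro bounded_imp_bdd_above compact_imp_bounded)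
  then show ?thesis unfolding sup_norm_on_def using assms(2) by (rule cSUP_upper2) simp
qed

lemma W_disj:
  assumes "j < j'"
  shows "Wset a b g ((2::real) powi j) \<inter> Wset a b g (2 powi j') = {}"
proof -
  have "(2::real) * 2 powi j = 2 powi (j + 1)" by (simp add: power_int_add_1')
  also have "\<dots> \<le> 2 powi j'" using assms by (intro power_int_increasing) auto
  finally have le: "(2::real) * 2 powi j \<le> 2 powi j'" .
  show ?thesis
  proof (rule ccontr)
    assume "\<not> ?thesis"
    then obtain x where "x \<in> Wset a b g (2 powi j)" "x \<in> Wset a b g (2 powi j')" by blast
    then have "hyst a g x (2 powi j')" "\<not> hyst a g x (2 * 2 powi j)" unfolding Wset_def by auto
    then show False using hyst_mono[OF le] by blast
  qed
qed

theorem theorem2p1: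
  fixes a b :: real and r :: nat and \<phi> :: "real \<Rightarrow> real"
    and f :: "nat \<Rightarrow> real \<Rightarrow> real"
  assumes "a \<le> b" and "r \<ge> 1"
    and "\<forall>x\<in>{a..b}. f 0 x = \<phi> x"
    and "\<forall>k<r. \<forall>x\<in>{a..b}. (f k has_real_derivative f (Suc k) x) (at x within {a..b})"
    and "continuous_on {a..b} (f r)"
  shows "\<exists>(J :: int \<Rightarrow> nat set) (K :: int \<Rightarrow> nat \<Rightarrow> real set).
     (\<forall>j\<in>dyadic_exps (sup_norm_on {a..b} \<phi>).
        finite (J j) \<and>
        real (card (J j)) \<le> 10 * real r * (1 + (b - a) * sup_norm_on {a..b} (f r) powr (1 / real r)
                                   * ((2::real) powi j) powr (- 1 / real r)))
   \<and> (\<forall>j\<in>dyadic_exps (sup_norm_on {a..b} \<phi>). \<forall>i\<in>J j. is_interval (K j i))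
   \<and> (\<forall>j\<in>dyadic_exps (sup_norm_on {a..b} \<phi>). \<forall>i\<in>J j.
        \<forall>j'\<in>dyadic_exps (sup_norm_on {a..b} \<phi>). \<forall>i'\<in>J j'.
          (j, i) \<noteq> (j', i') \<longrightarrow> K j i \<inter> K j' i' = {})
   \<and> (\<Union>j\<in>dyadic_exps (sup_norm_on {a..b} \<phi>). \<Union>i\<in>J j. K j i) = {x\<in>{a..b}. \<phi> x \<noteq> 0}
   \<and> (\<forall>j\<in>dyadic_exps (sup_norm_on {a..b} \<phi>). \<forall>i\<in>J j. \<forall>x\<in>K j i.
        (2::real) powi j / 2 < \<bar>\<phi> x\<bar> \<and> \<bar>\<phi> x\<bar> < 4 * (2::real) powi j)"
proof -
  note ab = assms(1) and f0 = assms(3) and der = assms(4) and fr = assms(5)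
  obtain n where rn: "r = Suc n" using assms(2) by (cases r) auto
  define g where "g = (\<lambda>x. \<bar>\<phi> x\<bar>)"
  define M where "M = sup_norm_on {a..b} \<phi>"
  define C where "C = sup_norm_on {a..b} (f r)"
  have "continuous_on {a..b} (f 0)"
    unfolding continuous_on_eq_continuous_within
    using der rn by (auto intro: DERIV_continuous)
  then have phic: "continuous_on {a..b} \<phi>" by (rule continuous_on_eq) (use f0 in auto)
  have gc: "continuous_on {a..b} g" unfolding g_def using phic by (intro continuous_intros)
  have gM: "g x \<le> M" if "x \<in> {a..b}" for x
    unfolding g_def M_def using sup_norm_bound[OF phic that] .
  have fC: "\<forall>x\<in>{a..b}. \<bar>f r x\<bar> \<le> C" unfolding C_def using sup_norm_bound[OF fr] by blast
  have C0: "0 \<le> C" using fC ab by (meson abs_ge_zero atLeastAtMost_iff order_refl order_trans)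
  define L where "L j = (b - a) * C powr (1 / real r) * ((2::real) powi j) powr (- 1 / real r)" for j :: int
  define N where "N j = max 1 (nat \<lceil>5 * L j\<rceil>)" for j :: int
  define W where "W j = Wset a b g ((2::real) powi j)" for j :: int
  define comps where "comps j = connected_component_set (W j) ` (W j)" for j :: int
  have L0: "0 \<le> L j" for j unfolding L_def using ab by simp
  have N1: "0 < N j" for j unfolding N_def by simp
  have N5: "5 * L j \<le> real (N j)" for j
  proof -
    have "5 * L j \<le> real (nat \<lceil>5 * L j\<rceil>)" by linarith
    then show ?thesis unfolding N_def by linarith
  qed
  have Nub: "real (N j) \<le> 5 * L j + 1" for j
  proof (cases "\<lceil>5 * L j\<rceil> \<le> 1")
    case True then show ?thesis unfolding N_def using L0[of j] by auto
  next
    case False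
    then have "N j = nat \<lceil>5 * L j\<rceil>" unfolding N_def by simp
    moreover have "real (nat \<lceil>5 * L j\<rceil>) = real_of_int \<lceil>5 * L j\<rceil>" using L0[of j] by simp
    moreover have "real_of_int \<lceil>5 * L j\<rceil> < 5 * L j + 1" using ceiling_correct[of "5 * L j"] by linarith
    ultimately show ?thesis by linarith
  qed
  have count: "card F \<le> (2*n+1) * N j" if F: "F \<subseteq> comps j" "finite F" for F j
  proof -
    define l where "l = (2::real) powi j"
    have lpos: "0 < l" unfolding l_def by simp
    define \<delta> where "\<delta> = (b - a) / real (N j)"
    have Cd: "C * \<delta> ^ r \<le> l / 5" unfolding \<delta>_def
      by (rule delta_bound[OF C0 lpos ab assms(2)]) (use N1[of j] N5[of j] in \<open>auto simp: L_def l_def\<close>)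
    have approx: "\<forall>m<N j. \<exists>p. degree p \<le> n \<and> (\<forall>x\<in>{a + real m * ((b - a) / N j) .. a + real (m+1) * ((b - a) / N j)}. \<bar>\<phi> x - poly p x\<bar> \<le> l/5)"
    proof (intro allI impI)
      fix m assume m: "m < N j"
      define t where "t = a + real m * \<delta>"
      have d0: "0 \<le> \<delta>" unfolding \<delta>_def using ab by simp
      have bN: "a + real (N j) * \<delta> = b" unfolding \<delta>_def using N1[of j] by simp
      have "real (m + 1) \<le> real (N j)" using m by simp
      then have mb: "a + real (m+1) * \<delta> \<le> b" using bN d0 by (metis add_le_cancel_left mult_right_mono)
      have ta: "a \<le> t" unfolding t_def using d0 by simp
      have tb: "t \<le> b" using mb d0 unfolding t_def by (simp add: algebra_simps)
      obtain p where p: "degree p \<le> n" "\<forall>x\<in>{a..b}. \<bar>\<phi> x - poly p x\<bar> \<le> C * \<bar>x - t\<bar> ^ r / fact n"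
        using taylor_piece[OF rn f0 der fC, of t] ta tb by auto
      have "\<bar>\<phi> x - poly p x\<bar> \<le> l/5" if x: "x \<in> {t .. a + real (m+1) * \<delta>}" for x
      proof -
        have xab: "x \<in> {a..b}" using x ta mb by auto
        have "\<bar>x - t\<bar> \<le> \<delta>" using x unfolding t_def by (simp add: algebra_simps)
        then have "\<bar>x - t\<bar> ^ r \<le> \<delta> ^ r" by (intro power_mono) auto
        then have "C * \<bar>x - t\<bar> ^ r \<le> C * \<delta> ^ r" using C0 by (rule mult_left_mono)
        moreover have "C * \<bar>x - t\<bar> ^ r / fact n \<le> C * \<bar>x - t\<bar> ^ r"
        proof -
          have "C * \<bar>x - t\<bar> ^ r / fact n \<le> C * \<bar>x - t\<bar> ^ r / 1"
            by (rule divide_left_mono) (use C0 in auto)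
          then show ?thesis by simp
        qed
        ultimately show ?thesis using p(2) xab Cd by fastforce
      qed
      then show "\<exists>p. degree p \<le> n \<and> (\<forall>x\<in>{a + real m * ((b - a) / N j) .. a + real (m+1) * ((b - a) / N j)}. \<bar>\<phi> x - poly p x\<bar> \<le> l/5)"
        using p(1) unfolding t_def \<delta>_def by blast
    qed
    show ?thesis
      using level_count[where \<phi>=\<phi> and a=a and b=b and l=l and N="N j" and n=n and F=F] gc lpos ab N1[of j] approx F
      unfolding g_def W_def comps_def l_def by simp
  qed
  have fin: "finite (comps j)" for j
  proof (rule ccontr)
    assume "infinite (comps j)"
    then obtain F where "F \<subseteq> comps j" "finite F" "card F = (2*n+1) * N j + 1"
      using infinite_arbitrarily_large by blast
    then show False using count[of F j] by simp
  qed
  have cbound: "real (card (comps j)) \<le> 10 * real r * (1 + L j)" for j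
  proof -
    have "card (comps j) \<le> (2*n+1) * N j" using count[OF order_refl fin] .
    then have "real (card (comps j)) \<le> real (2*n+1) * real (N j)" by (metis of_nat_le_iff of_nat_mult)
    also have "\<dots> \<le> real (2*n+1) * (5 * L j + 1)" using Nub[of j] by (intro mult_left_mono) auto
    also have "\<dots> \<le> 10 * real r * (1 + L j)"
    proof -
      have "real (2*n+1) \<le> 2 * real r" using rn by simp
      then have "real (2*n+1) * (5 * L j + 1) \<le> 2 * real r * (5 * L j + 1)"
        using L0[of j] by (intro mult_right_mono) auto
      also have "\<dots> \<le> 10 * real r * (1 + L j)" using L0[of j] by (simp add: algebra_simps)
      finally show ?thesis .
    qed
    finally show ?thesis .
  qed
  define J where "J j = {0..<card (comps j)}" for j :: int
  define K where "K j = (SOME h. bij_betw h {0..<card (comps j)} (comps j))" for j :: int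
  have bij: "bij_betw (K j) (J j) (comps j)" for j
    unfolding K_def J_def by (rule someI_ex[OF ex_bij_betw_nat_finite[OF fin]])
  have Kcomp: "K j i \<in> comps j" if "i \<in> J j" for j i using bij_betwE[OF bij[of j]] that by blast
  have KW: "K j i \<subseteq> W j" if "i \<in> J j" for j i
    using Kcomp[OF that] connected_component_subset unfolding comps_def by blast
  have Wband: "(2::real) powi j / 2 < g x \<and> g x < 4 * 2 powi j" if "x \<in> W j" for x j
    using W_band[of "(2::real) powi j" x a b g] that unfolding W_def by simp
  have UW: "(\<Union>i\<in>J j. K j i) = W j" for j
  proof -
    have "K j ` J j = comps j" using bij[of j] by (simp add: bij_betw_def)
    then show ?thesis unfolding comps_def by (metis Union_connected_component)
  qed
  have UWall: "(\<Union>j\<in>dyadic_exps M. W j) = {x\<in>{a..b}. \<phi> x \<noteq> 0}"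
  proof
    show "(\<Union>j\<in>dyadic_exps M. W j) \<subseteq> {x\<in>{a..b}. \<phi> x \<noteq> 0}"
    proof
      fix x assume "x \<in> (\<Union>j\<in>dyadic_exps M. W j)"
      then obtain j where x: "x \<in> W j" by blast
      then have "x \<in> {a..b}" unfolding W_def Wset_def by blast
      moreover have "0 < g x"
      proof -
        have "(0::real) < 2 powi j" by simp
        then show ?thesis using Wband[OF x] by linarith
      qed
      ultimately show "x \<in> {x\<in>{a..b}. \<phi> x \<noteq> 0}" unfolding g_def by auto
    qed
    show "{x\<in>{a..b}. \<phi> x \<noteq> 0} \<subseteq> (\<Union>j\<in>dyadic_exps M. W j)"
    proof
      fix x assume x: "x \<in> {x\<in>{a..b}. \<phi> x \<noteq> 0}"
      then have xab: "x \<in> {a..b}" and gx: "0 < g x" unfolding g_def by auto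
      obtain j where xW: "x \<in> Wset a b g (2 powi j)" using cover[where g=g, OF xab gx] by blast
      obtain c where c: "c \<in> {a..x}" "2 powi j \<le> g c" using W_witness[OF gc xW] by auto
      have "c \<in> {a..b}" using c(1) xab by auto
      then have "(2::real) powi j \<le> M" using gM c(2) by (meson order_trans)
      then have "j \<in> dyadic_exps M" unfolding dyadic_exps_def by simp
      then show "x \<in> (\<Union>j\<in>dyadic_exps M. W j)" using xW unfolding W_def by blast
    qed
  qed
  show ?thesis
  proof (intro exI[of _ J] exI[of _ K] conjI ballI impI)
    fix j assume "j \<in> dyadic_exps (sup_norm_on {a..b} \<phi>)"
    show "finite (J j)" unfolding J_def by simp
    show "real (card (J j)) \<le> 10 * real r * (1 + (b - a) * sup_norm_on {a..b} (f r) powr (1 / real r)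
                                   * ((2::real) powi j) powr (- 1 / real r))"
      using cbound[of j] unfolding J_def L_def C_def by simp
  next
    fix j i assume "j \<in> dyadic_exps (sup_norm_on {a..b} \<phi>)" "i \<in> J j"
    then obtain x where "K j i = connected_component_set (W j) x" using Kcomp unfolding comps_def by blast
    then show "is_interval (K j i)" by (simp add: is_interval_connected_1)
  next
    fix j i j' i'
    assume j: "j \<in> dyadic_exps (sup_norm_on {a..b} \<phi>)" "i \<in> J j"
      "j' \<in> dyadic_exps (sup_norm_on {a..b} \<phi>)" "i' \<in> J j'" and ne: "(j, i) \<noteq> (j', i')"
    show "K j i \<inter> K j' i' = {}"
    proof (cases "j = j'")
      case True
      then have "i \<noteq> i'" using ne by simp
      then have neK: "K j i \<noteq> K j i'" using bij_betw_imp_inj_on[OF bij[of j]] j True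
        by (metis inj_on_contraD)
      obtain x where x: "x \<in> W j" "K j i = connected_component_set (W j) x"
        using Kcomp[OF j(2)] unfolding comps_def by blast
      obtain y where y: "y \<in> W j" "K j i' = connected_component_set (W j) y"
        using Kcomp[of i' j] j(4) True unfolding comps_def by blast
      show ?thesis using connected_component_nonoverlap[of "W j" x y] x y neK True by simp
    next
      case False
      then consider "j < j'" | "j' < j" by linarith
      then have "W j \<inter> W j' = {}" unfolding W_def by cases (auto dest: W_disj[of _ _ a b g])
      then show ?thesis using KW[OF j(2)] KW[OF j(4)] by blast
    qed
  next
    show "(\<Union>j\<in>dyadic_exps (sup_norm_on {a..b} \<phi>). \<Union>i\<in>J j. K j i) = {x\<in>{a..b}. \<phi> x \<noteq> 0}"
      using UWall UW unfolding M_def by simp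
  next
    fix j i x assume "j \<in> dyadic_exps (sup_norm_on {a..b} \<phi>)" "i \<in> J j" "x \<in> K j i"
    then have "x \<in> W j" using KW by blast
    then have "(2::real) powi j / 2 < \<bar>\<phi> x\<bar> \<and> \<bar>\<phi> x\<bar> < 4 * (2::real) powi j"
      using Wband unfolding g_def by blast
    then show "(2::real) powi j / 2 < \<bar>\<phi> x\<bar>" "\<bar>\<phi> x\<bar> < 4 * (2::real) powi j" by simp_all
  qed
qed


end
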